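(* Let $G=(V,E)$ be a connected simple graph on $n$ vertices and let $c:E\to\mathbb{R}_{\ge 0}$ be any conductance function such that the edges of positive conductance form a connected spanning subgraph of $G$. Then the cyclic cover time of the associated random walk satisfies $CYC[G,c]\ge \frac{1}{2}n^2$.
   Context: For a vertex $v$, $N(v)$ is its set of neighbors. The random walk associated with $(G,c)$ is the Markov chain on $V$ which from the current vertex $v$ moves to $u\in N(v)$ with probability $\frac{c(v,u)}{\sum_{w\in N(v)}c(v,w)}$. The hitting time $H[u,v]$ is the expected number of steps for the walk started at $u$ to reach $v$. The cyclic cover time is $CYC[G,c]=\min_{\sigma}\left(\sum_{i=1}^{n-1}H[v_{\sigma(i)},v_{\sigma(i+1)}]+H[v_{\sigma(n)},v_{\sigma(1)}]\right)$, minimum over all orderings $\sigma$ of the vertices $v_1,\dots,v_n$. *)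

theory Defs
  imports "HOL-Analysis.Analysis"
begin

definition simple_graph :: "'a set \<Rightarrow> 'a set set \<Rightarrow> bool" where
  "simple_graph V E \<longleftrightarrow> finite V \<and> (\<forall>e\<in>E. \<exists>x y. x \<in> V \<and> y \<in> V \<and> x \<noteq> y \<and> e = {x, y})"

definition graph_connected :: "'a set \<Rightarrow> 'a set set \<Rightarrow> bool" where
  "graph_connected V E \<longleftrightarrow>
     (\<forall>x\<in>V. \<forall>y\<in>V. (x, y) \<in> {(a, b). a \<in> V \<and> b \<in> V \<and> {a, b} \<in> E}\<^sup>*)"

definition nbrs :: "'a set set \<Rightarrow> 'a \<Rightarrow> 'a set" where
  "nbrs E v = {u. {v, u} \<in> E}"

definition trans_prob :: "'a set set \<Rightarrow> ('a set \<Rightarrow> real) \<Rightarrow> 'a \<Rightarrow> 'a \<Rightarrow> real" where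
  "trans_prob E c v u =
     (if u \<in> nbrs E v then c {v, u} / (\<Sum>w\<in>nbrs E v. c {v, w}) else 0)"

text \<open>not_hit E c v t x is the probability that the walk started at x
  has not visited v at any of the times 0, ..., t, i.e. P_x(T_v > t),
  where T_v is the first time >= 0 at which the walk is at v.\<close>
fun not_hit :: "'a set set \<Rightarrow> ('a set \<Rightarrow> real) \<Rightarrow> 'a \<Rightarrow> nat \<Rightarrow> 'a \<Rightarrow> real" where
  "not_hit E c v 0 x = (if x = v then 0 else 1)"
| "not_hit E c v (Suc t) x =
     (if x = v then 0 else (\<Sum>y\<in>nbrs E x. trans_prob E c x y * not_hit E c v t y))"

text \<open>Hitting time H[u,v] = E_u[T_v] = sum_{t>=0} P_u(T_v > t), valued in [0, infinity].\<close>
definition hitting_time :: "'a set set \<Rightarrow> ('a set \<Rightarrow> real) \<Rightarrow> 'a \<Rightarrow> 'a \<Rightarrow> ennreal" where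
  "hitting_time E c u v = (\<Sum>t. ennreal (not_hit E c v t u))"

definition cyclic_cover_time :: "'a set \<Rightarrow> 'a set set \<Rightarrow> ('a set \<Rightarrow> real) \<Rightarrow> ennreal" where
  "cyclic_cover_time V E c =
     Min ((\<lambda>xs. \<Sum>i<length xs. hitting_time E c (xs ! i) (xs ! ((i + 1) mod length xs)))
            ` {xs. distinct xs \<and> set xs = V})"

end

theory Submission
  imports Defs
begin


locale alg =
  fixes V :: "'a set" and w :: "'a \<Rightarrow> 'a \<Rightarrow> real" and d :: "'a \<Rightarrow> real" and H :: "'a \<Rightarrow> 'a \<Rightarrow> real"
  assumes finV: "finite V"
    and wsym: "\<And>x y. w x y = w y x"
    and wnn: "\<And>x y. w x y \<ge> 0"
    and wdiag: "\<And>x. w x x = 0"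
    and dw: "\<And>x. x \<in> V \<Longrightarrow> d x = (\<Sum>y\<in>V. w x y)"
    and dpos: "\<And>x. x \<in> V \<Longrightarrow> d x > 0"
    and Hvv: "\<And>v. v \<in> V \<Longrightarrow> H v v = 0"
    and Heq: "\<And>v x. v \<in> V \<Longrightarrow> x \<in> V \<Longrightarrow> x \<noteq> v \<Longrightarrow> d x * H v x = d x + (\<Sum>y\<in>V. w x y * H v y)"
begin

definition L :: "('a \<Rightarrow> real) \<Rightarrow> 'a \<Rightarrow> real" where
  "L f x = d x * f x - (\<Sum>y\<in>V. w x y * f y)"

definition C where "C = (\<Sum>x\<in>V. d x)"
definition T where "T u = (\<Sum>x\<in>V. d x * H u x)"

lemma L_alt: "x \<in> V \<Longrightarrow> L f x = (\<Sum>y\<in>V. w x y * (f x - f y))"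
  unfolding L_def dw by (simp add: sum_distrib_left sum_subtractf right_diff_distrib mult.commute)

lemma Lsum: "(\<Sum>x\<in>V. L f x) = 0"
proof -
  have "(\<Sum>x\<in>V. \<Sum>y\<in>V. w x y * f y) = (\<Sum>y\<in>V. \<Sum>x\<in>V. w x y * f y)" by (rule sum.swap)
  also have "\<dots> = (\<Sum>y\<in>V. d y * f y)" using dw
    by (simp add: sum_distrib_right[symmetric] wsym)
  finally show ?thesis unfolding L_def by (simp add: sum_subtractf)
qed

lemma L_H_off: "v \<in> V \<Longrightarrow> x \<in> V \<Longrightarrow> x \<noteq> v \<Longrightarrow> L (H v) x = d x"
  unfolding L_def using Heq by simp

lemma L_H_on: assumes "v \<in> V" shows "L (H v) v = d v - C"
proof -
  have "0 = L (H v) v + (\<Sum>x\<in>V - {v}. L (H v) x)"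
    using Lsum[of "H v"] finV assms by (simp add: sum.remove)
  also have "(\<Sum>x\<in>V - {v}. L (H v) x) = (\<Sum>x\<in>V - {v}. d x)"
    using L_H_off assms by (intro sum.cong) auto
  also have "\<dots> = C - d v" unfolding C_def using finV assms by (simp add: sum_diff1)
  finally show ?thesis by simp
qed

lemma L_H: "v \<in> V \<Longrightarrow> x \<in> V \<Longrightarrow> L (H v) x = d x - (if x = v then C else 0)"
  using L_H_off L_H_on by auto

lemma L_symm: "(\<Sum>x\<in>V. g x * L f x) = (\<Sum>x\<in>V. f x * L g x)"
proof -
  have "(\<Sum>x\<in>V. \<Sum>y\<in>V. g x * (w x y * f y)) = (\<Sum>y\<in>V. \<Sum>x\<in>V. g x * (w x y * f y))" by (rule sum.swap)
  also have "\<dots> = (\<Sum>x\<in>V. \<Sum>y\<in>V. f x * (w x y * g y))"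
    by (intro sum.cong refl) (simp add: wsym algebra_simps)
  finally have *: "(\<Sum>x\<in>V. \<Sum>y\<in>V. g x * (w x y * f y)) = (\<Sum>x\<in>V. \<Sum>y\<in>V. f x * (w x y * g y))" .
  have p: "h x * L k x = d x * h x * k x - (\<Sum>y\<in>V. h x * (w x y * k y))" for h k x
    unfolding L_def by (simp add: right_diff_distrib sum_distrib_left)
  have "(\<Sum>x\<in>V. g x * L f x) = (\<Sum>x\<in>V. d x * g x * f x) - (\<Sum>x\<in>V. \<Sum>y\<in>V. g x * (w x y * f y))"
    unfolding p sum_subtractf ..
  also have "\<dots> = (\<Sum>x\<in>V. d x * f x * g x) - (\<Sum>x\<in>V. \<Sum>y\<in>V. f x * (w x y * g y))"
    unfolding * by (simp add: mult.commute mult.left_commute)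
  also have "\<dots> = (\<Sum>x\<in>V. f x * L g x)"
    unfolding p sum_subtractf ..
  finally show ?thesis .
qed

lemma energy: assumes u: "u \<in> V"
  shows "(\<Sum>x\<in>V. f x * L f x) \<ge> (\<Sum>y\<in>V. w u y * (f u - f y)^2)"
proof -
  define g where "g x y = w x y * (f x - f y)^2" for x y
  have gnn: "g x y \<ge> 0" for x y unfolding g_def using wnn by simp
  have gsym: "g x y = g y x" for x y unfolding g_def by (simp add: wsym power2_commute)
  have A: "(\<Sum>x\<in>V. f x * L f x) = (\<Sum>x\<in>V. \<Sum>y\<in>V. w x y * f x * (f x - f y))"
    using L_alt by (simp add: sum_distrib_left algebra_simps)
  have "(\<Sum>x\<in>V. \<Sum>y\<in>V. w x y * f x * (f x - f y)) = (\<Sum>y\<in>V. \<Sum>x\<in>V. w x y * f x * (f x - f y))"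
    by (rule sum.swap)
  also have "\<dots> = (\<Sum>x\<in>V. \<Sum>y\<in>V. w x y * f y * (f y - f x))"
    by (intro sum.cong refl) (simp add: wsym)
  finally have B: "(\<Sum>x\<in>V. \<Sum>y\<in>V. w x y * f x * (f x - f y)) = (\<Sum>x\<in>V. \<Sum>y\<in>V. w x y * f y * (f y - f x))" .
  have "2 * (\<Sum>x\<in>V. f x * L f x) = (\<Sum>x\<in>V. \<Sum>y\<in>V. w x y * f x * (f x - f y)) + (\<Sum>x\<in>V. \<Sum>y\<in>V. w x y * f y * (f y - f x))"
    using A B by simp
  also have "\<dots> = (\<Sum>x\<in>V. \<Sum>y\<in>V. g x y)"
    unfolding g_def sum.distrib[symmetric] by (intro sum.cong refl) (simp add: power2_eq_square algebra_simps)
  finally have C2: "2 * (\<Sum>x\<in>V. f x * L f x) = (\<Sum>x\<in>V. \<Sum>y\<in>V. g x y)" .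
  have s1: "(\<Sum>x\<in>V. \<Sum>y\<in>V. g x y) = (\<Sum>y\<in>V. g u y) + (\<Sum>x\<in>V-{u}. \<Sum>y\<in>V. g x y)"
    using sum.remove[OF finV u, of "\<lambda>x. \<Sum>y\<in>V. g x y"] by simp
  have s2: "(\<Sum>x\<in>V-{u}. g x u) \<le> (\<Sum>x\<in>V-{u}. \<Sum>y\<in>V. g x y)"
    using finV u gnn by (intro sum_mono member_le_sum) auto
  have s3: "(\<Sum>x\<in>V-{u}. g x u) = (\<Sum>x\<in>V. g x u)"
    using sum.remove[OF finV u, of "\<lambda>x. g x u"] by (simp add: g_def wdiag)
  have s4: "(\<Sum>x\<in>V. g x u) = (\<Sum>y\<in>V. g u y)" using gsym by simp
  have "(\<Sum>x\<in>V. \<Sum>y\<in>V. g x y) \<ge> 2 * (\<Sum>y\<in>V. g u y)" using s1 s2 s3 s4 by linarith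
  with C2 show ?thesis unfolding g_def by simp
qed

lemma cauchy: assumes u: "u \<in> V"
  shows "(\<Sum>y\<in>V. w u y * a y)^2 \<le> d u * (\<Sum>y\<in>V. w u y * (a y)^2)"
proof -
  define S where "S = (\<Sum>y\<in>V. w u y * a y)"
  define m where "m = S / d u"
  have dp: "d u > 0" using dpos u .
  have "0 \<le> (\<Sum>y\<in>V. w u y * (a y - m)^2)" using wnn by (intro sum_nonneg) simp
  also have "\<dots> = (\<Sum>y\<in>V. w u y * (a y)^2) - 2 * m * S + m^2 * d u"
    unfolding S_def dw[OF u]
    by (simp add: power2_eq_square sum_subtractf sum.distrib sum_distrib_left sum_distrib_right algebra_simps)
  also have "\<dots> = (\<Sum>y\<in>V. w u y * (a y)^2) - S^2 / d u"
    unfolding m_def using dp by (simp add: power2_eq_square field_simps)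
  finally show ?thesis unfolding S_def[symmetric] using dp by (simp add: field_simps)
qed


lemma C_pos: "V \<noteq> {} \<Longrightarrow> C > 0"
  unfolding C_def using finV dpos by (intro sum_pos) auto

lemma pair: assumes u: "u \<in> V" and v: "v \<in> V" and uv: "u \<noteq> v"
  shows "C * (H u v + H v u) \<ge> C^2 / d u"
proof -
  define f where "f x = H u x - H v x" for x
  have Lf: "L f x = (if x = v then C else 0) - (if x = u then C else 0)" if x: "x \<in> V" for x
  proof -
    have "L f x = L (H u) x - L (H v) x" unfolding L_def f_def
      by (simp add: right_diff_distrib sum_subtractf)
    also have "\<dots> = (if x = v then C else 0) - (if x = u then C else 0)"
      using L_H[OF u x] L_H[OF v x] by simp
    finally show ?thesis .
  qed
  define R where "R = (\<Sum>y\<in>V. w u y * (f u - f y)^2)"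
  have "L f u = - C" using Lf[OF u] uv by simp
  hence "(\<Sum>y\<in>V. w u y * (f u - f y)) = - C" using L_alt[OF u] by simp
  hence CR: "C^2 \<le> d u * R" using cauchy[OF u, of "\<lambda>y. f u - f y"] unfolding R_def by simp
  have ER: "(\<Sum>x\<in>V. f x * L f x) \<ge> R" unfolding R_def by (rule energy[OF u])
  have "(\<Sum>x\<in>V. f x * L f x) = (\<Sum>x\<in>V. (if x = v then C * f v else 0) - (if x = u then C * f u else 0))"
  proof (rule sum.cong[OF refl])
    fix x assume "x \<in> V"
    then show "f x * L f x = (if x = v then C * f v else 0) - (if x = u then C * f u else 0)"
      by (subst Lf[OF \<open>x \<in> V\<close>]) (auto simp: algebra_simps)
  qed
  also have "\<dots> = C * f v - C * f u" using u v finV by (simp add: sum_subtractf)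
  also have "\<dots> = C * (H u v + H v u)" unfolding f_def using Hvv u v by (simp add: algebra_simps)
  finally have "C * (H u v + H v u) \<ge> R" using ER by simp
  moreover have "C^2 / d u \<le> R" using CR dpos[OF u] by (simp add: divide_le_eq mult.commute)
  ultimately show ?thesis by linarith
qed

lemma key: assumes u: "u \<in> V" and v: "v \<in> V" and uv: "u \<noteq> v"
  shows "2 * C * H v u \<ge> C^2 / (2 * d u) + C^2 / (2 * d v) + T v - T u"
proof -
  have s: "(\<Sum>x\<in>V. H u x * L (H v) x) = (\<Sum>x\<in>V. H v x * L (H u) x)" by (rule L_symm)
  have e: "(\<Sum>x\<in>V. H a x * L (H b) x) = T a - C * H a b" if a: "a \<in> V" and b: "b \<in> V" for a b
  proof -
    have "(\<Sum>x\<in>V. H a x * L (H b) x) = (\<Sum>x\<in>V. d x * H a x - (if x = b then C * H a b else 0))"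
    proof (rule sum.cong[OF refl])
      fix x assume "x \<in> V"
      then show "H a x * L (H b) x = d x * H a x - (if x = b then C * H a b else 0)"
        by (subst L_H[OF b \<open>x \<in> V\<close>]) (auto simp: algebra_simps)
    qed
    also have "\<dots> = T a - C * H a b" unfolding T_def using b finV by (simp add: sum_subtractf)
    finally show ?thesis .
  qed
  have eq: "T u - C * H u v = T v - C * H v u" using s e[OF u v] e[OF v u] by simp
  have p1: "C * (H u v + H v u) \<ge> C^2 / d u" by (rule pair[OF u v uv])
  have p2: "C * (H v u + H u v) \<ge> C^2 / d v" using pair[OF v u] uv by simp
  have "C^2 / (2 * d u) + C^2 / (2 * d v) = (C^2 / d u + C^2 / d v) / 2" by (simp add: field_simps)
  then show ?thesis using eq p1 p2 by (simp add: algebra_simps)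
qed

end

lemma rot_sum: fixes n :: nat and F :: "nat \<Rightarrow> real" assumes "n > 0"
  shows "(\<Sum>i<n. F ((i + 1) mod n)) = (\<Sum>i<n. F i)"
proof -
  obtain m where Suc: "n = Suc m" using assms by (cases n) auto
  have "(\<Sum>i<Suc m. F ((i + 1) mod Suc m)) = (\<Sum>i<m. F ((i + 1) mod Suc m)) + F 0"
    by simp
  also have "(\<Sum>i<m. F ((i + 1) mod Suc m)) = (\<Sum>i<m. F (Suc i))"
    by (intro sum.cong refl) simp
  finally have c: "(\<Sum>i<Suc m. F ((i + 1) mod Suc m)) = (\<Sum>i<m. F (Suc i)) + F 0" .
  have r: "(\<Sum>i<Suc m. F i) = F 0 + (\<Sum>i<m. F (Suc i))" by (rule sum.lessThan_Suc_shift)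
  show ?thesis using c r unfolding Suc by linarith
qed


lemma sum_nth_set: assumes "distinct xs" shows "(\<Sum>i<length xs. G (xs ! i)) = (\<Sum>x\<in>set xs. (G x :: real))"
proof -
  have "set xs = (nth xs) ` {..<length xs}" by (auto simp: set_conv_nth)
  moreover have "inj_on (nth xs) {..<length xs}" using assms by (intro inj_on_nth) auto
  ultimately show ?thesis by (simp add: sum.reindex)
qed

context alg begin

lemma inv_sum: assumes "V \<noteq> {}" shows "C * (\<Sum>x\<in>V. 1 / d x) \<ge> real (card V) ^ 2"
proof -
  have "C * (\<Sum>x\<in>V. 1 / d x) = (\<Sum>x\<in>V. \<Sum>y\<in>V. d x / d y)"
    unfolding C_def sum_product by simp
  moreover have "(\<Sum>x\<in>V. \<Sum>y\<in>V. d x / d y) = (\<Sum>x\<in>V. \<Sum>y\<in>V. d y / d x)" by (rule sum.swap)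
  moreover have "(\<Sum>x\<in>V. \<Sum>y\<in>V. d x / d y + d y / d x) \<ge> (\<Sum>x\<in>V. \<Sum>y\<in>V. 2)"
  proof (intro sum_mono)
    fix x y assume x: "x \<in> V" and y: "y \<in> V"
    have a: "d x > 0" "d y > 0" using dpos x y by auto
    have "0 \<le> (d x - d y)^2 / (d x * d y)" using a by simp
    also have "\<dots> = d x / d y + d y / d x - 2" using a by (simp add: field_simps power2_eq_square)
    finally show "2 \<le> d x / d y + d y / d x" by simp
  qed
  moreover have "(\<Sum>x\<in>V. \<Sum>y\<in>V. (2::real)) = 2 * real (card V) ^ 2" by (simp add: power2_eq_square)
  ultimately show ?thesis by (simp add: sum.distrib)
qed

lemma cyc: assumes dx: "distinct xs" and sx: "set xs = V" and n2: "length xs \<ge> 2"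
  shows "(\<Sum>i<length xs. H (xs ! ((i + 1) mod length xs)) (xs ! i)) \<ge> real (card V) ^ 2 / 2"
proof -
  define n where "n = length xs"
  have n: "n \<ge> 2" "n > 0" using n2 unfolding n_def by auto
  have Vne: "V \<noteq> {}" using sx n unfolding n_def by auto
  have Cp: "C > 0" using C_pos[OF Vne] .
  define G where "G x = C^2 / (2 * d x)" for x
  have step: "2 * C * H (xs ! ((i + 1) mod n)) (xs ! i) \<ge>
      G (xs ! i) + G (xs ! ((i + 1) mod n)) + T (xs ! ((i + 1) mod n)) - T (xs ! i)" if i: "i < n" for i
  proof -
    have j: "(i + 1) mod n < n" using n by simp
    have ne: "i \<noteq> (i + 1) mod n"
      using n i by (cases "i + 1 < n") (auto simp: mod_if)
    have "xs ! i \<noteq> xs ! ((i + 1) mod n)" using dx i j ne unfolding n_def by (simp add: nth_eq_iff_index_eq)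
    moreover have "xs ! i \<in> V" "xs ! ((i + 1) mod n) \<in> V" using i j sx unfolding n_def by auto
    ultimately show ?thesis unfolding G_def by (intro key) auto
  qed
  have "2 * C * (\<Sum>i<n. H (xs ! ((i + 1) mod n)) (xs ! i)) \<ge>
      (\<Sum>i<n. G (xs ! i) + G (xs ! ((i + 1) mod n)) + T (xs ! ((i + 1) mod n)) - T (xs ! i))"
    unfolding sum_distrib_left using step by (intro sum_mono) auto
  also have "(\<Sum>i<n. G (xs ! i) + G (xs ! ((i + 1) mod n)) + T (xs ! ((i + 1) mod n)) - T (xs ! i))
      = (\<Sum>i<n. G (xs ! i)) + (\<Sum>i<n. G (xs ! ((i + 1) mod n))) + (\<Sum>i<n. T (xs ! ((i + 1) mod n))) - (\<Sum>i<n. T (xs ! i))"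
    by (simp add: sum.distrib sum_subtractf)
  also have "\<dots> = 2 * (\<Sum>i<n. G (xs ! i))"
    using rot_sum[OF n(2), of "\<lambda>i. G (xs ! i)"] rot_sum[OF n(2), of "\<lambda>i. T (xs ! i)"] by simp
  also have "(\<Sum>i<n. G (xs ! i)) = (\<Sum>x\<in>V. G x)" using sum_nth_set[OF dx, of G] sx unfolding n_def by simp
  also have "(\<Sum>x\<in>V. G x) = C^2 / 2 * (\<Sum>x\<in>V. 1 / d x)"
    unfolding G_def sum_distrib_left by (intro sum.cong refl) simp
  finally have A: "2 * C * (\<Sum>i<n. H (xs ! ((i + 1) mod n)) (xs ! i)) \<ge> C * (C * (\<Sum>x\<in>V. 1 / d x))"
    by (simp add: power2_eq_square)
  hence "2 * (\<Sum>i<n. H (xs ! ((i + 1) mod n)) (xs ! i)) \<ge> C * (\<Sum>x\<in>V. 1 / d x)"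
    using Cp by (simp add: mult.assoc)
  with inv_sum[OF Vne] show ?thesis unfolding n_def by simp
qed

end



locale gsetup =
  fixes V :: "'a set" and E :: "'a set set" and c :: "'a set \<Rightarrow> real"
  assumes sg: "simple_graph V E"
    and cardV: "card V \<ge> 2"
    and cnn: "\<forall>e\<in>E. c e \<ge> 0"
    and pconn: "graph_connected V {e\<in>E. c e > 0}"
begin

definition d :: "'a \<Rightarrow> real" where "d x = (\<Sum>y\<in>nbrs E x. c {x, y})"
definition w :: "'a \<Rightarrow> 'a \<Rightarrow> real" where "w x y = (if {x,y} \<in> E then c {x,y} else 0)"

lemma finV: "finite V" using sg unfolding simple_graph_def by auto

lemma edge_in: "{x,y} \<in> E \<Longrightarrow> x \<in> V \<and> y \<in> V \<and> x \<noteq> y"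
proof -
  assume a: "{x,y} \<in> E"
  then obtain p q where "p \<in> V" "q \<in> V" "p \<noteq> q" "{x,y} = {p,q}"
    using sg unfolding simple_graph_def by blast
  then show ?thesis unfolding doubleton_eq_iff by auto
qed

lemma nbrs_sub: "nbrs E x \<subseteq> V" using edge_in unfolding nbrs_def by auto
lemma fin_nbrs: "finite (nbrs E x)" using nbrs_sub finite_subset finV by blast
lemma nbrs_nx: "x \<notin> nbrs E x" using edge_in[of x x] unfolding nbrs_def by auto
lemma nbrs_out: "x \<notin> V \<Longrightarrow> nbrs E x = {}" using edge_in unfolding nbrs_def by auto

lemma w_sym: "w x y = w y x" unfolding w_def by (simp add: insert_commute)
lemma w_nn: "w x y \<ge> 0" unfolding w_def using cnn by auto
lemma w_diag: "w x x = 0" unfolding w_def using edge_in[of x x] by auto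

lemma sum_nbrs_w: "(\<Sum>y\<in>nbrs E x. c {x,y} * f y) = (\<Sum>y\<in>V. w x y * f y)"
proof -
  have "(\<Sum>y\<in>V. w x y * f y) = (\<Sum>y\<in>nbrs E x. w x y * f y)"
    by (rule sum.mono_neutral_right[OF finV nbrs_sub]) (auto simp: w_def nbrs_def)
  also have "\<dots> = (\<Sum>y\<in>nbrs E x. c {x,y} * f y)"
    by (rule sum.cong) (auto simp: w_def nbrs_def)
  finally show ?thesis by simp
qed

lemma d_w: "d x = (\<Sum>y\<in>V. w x y)"
  using sum_nbrs_w[of x "\<lambda>_. 1"] unfolding d_def by simp

lemma d_pos: assumes "x \<in> V" shows "d x > 0"
proof -
  obtain y where y: "y \<in> V" "y \<noteq> x"
  proof -
    have "\<not> V \<subseteq> {x}"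
    proof
      assume "V \<subseteq> {x}"
      hence "card V \<le> card {x}" by (intro card_mono) auto
      thus False using cardV by simp
    qed
    then show ?thesis using that by blast
  qed
  let ?R = "{(a, b). a \<in> V \<and> b \<in> V \<and> {a, b} \<in> {e\<in>E. c e > 0}}"
  have "(x,y) \<in> ?R\<^sup>*" using pconn assms y unfolding graph_connected_def by blast
  hence "x \<noteq> y \<longrightarrow> (\<exists>z. (x,z) \<in> ?R)"
    by (induction rule: converse_rtrancl_induct) blast+
  then obtain z where z: "(x,z) \<in> ?R" using y(2) by blast
  hence zn: "z \<in> nbrs E x" and cz: "c {x,z} > 0" by (auto simp: nbrs_def)
  have "d x = c {x,z} + (\<Sum>y\<in>nbrs E x - {z}. c {x,y})"
    unfolding d_def using fin_nbrs zn by (simp add: sum.remove)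
  moreover have "(\<Sum>y\<in>nbrs E x - {z}. c {x,y}) \<ge> 0"
    by (rule sum_nonneg) (use cnn in \<open>auto simp: nbrs_def\<close>)
  ultimately show ?thesis using cz by linarith
qed

lemma P_eq: "trans_prob E c x y = (if y \<in> nbrs E x then c {x,y} / d x else 0)"
  unfolding trans_prob_def d_def by simp

lemma P_nn: "trans_prob E c x y \<ge> 0"
proof (cases "y \<in> nbrs E x")
  case True
  hence "x \<in> V" using nbrs_out by auto
  hence "c {x,y} \<ge> 0" using cnn True by (simp add: nbrs_def)
  then show ?thesis using True d_pos[of x] \<open>x \<in> V\<close> unfolding P_eq by simp
qed (simp add: P_eq)

lemma sumP_mult: "(\<Sum>y\<in>nbrs E x. trans_prob E c x y * f y) = (\<Sum>y\<in>V. w x y * f y) / d x"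
proof -
  have "(\<Sum>y\<in>nbrs E x. trans_prob E c x y * f y) = (\<Sum>y\<in>nbrs E x. c {x,y} * f y) / d x"
    unfolding P_eq sum_divide_distrib by (rule sum.cong) simp_all
  then show ?thesis by (simp add: sum_nbrs_w)
qed

lemma sumP: "x \<in> V \<Longrightarrow> (\<Sum>y\<in>nbrs E x. trans_prob E c x y) = 1"
  using sumP_mult[of x "\<lambda>_. 1"] d_w[of x] d_pos[of x] by simp


lemma sumP_le: "(\<Sum>y\<in>nbrs E x. trans_prob E c x y) \<le> 1"
  using sumP[of x] nbrs_out[of x] by (cases "x \<in> V") auto

abbreviation q where "q v t x \<equiv> not_hit E c v t x"

lemma q_v: "q v t v = 0" by (cases t) auto

lemma q_Suc: "x \<noteq> v \<Longrightarrow> q v (Suc t) x = (\<Sum>y\<in>nbrs E x. trans_prob E c x y * q v t y)"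
  by simp

lemma q_bounds: "0 \<le> q v t x \<and> q v t x \<le> 1"
proof (induction t arbitrary: x)
  case 0 then show ?case by simp
next
  case (Suc t)
  show ?case
  proof (cases "x = v")
    case False
    have "0 \<le> (\<Sum>y\<in>nbrs E x. trans_prob E c x y * q v t y)"
      using Suc P_nn by (intro sum_nonneg mult_nonneg_nonneg) auto
    moreover have "(\<Sum>y\<in>nbrs E x. trans_prob E c x y * q v t y) \<le> (\<Sum>y\<in>nbrs E x. trans_prob E c x y)"
      using Suc P_nn by (intro sum_mono mult_right_le_one_le) auto
    ultimately show ?thesis using False sumP_le[of x] by simp
  qed simp
qed

definition Q where "Q v t = Max ((q v t) ` V)"

lemma Vne: "V \<noteq> {}" using cardV by auto

lemma q_le_Q: "x \<in> V \<Longrightarrow> q v t x \<le> Q v t"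
  unfolding Q_def using finV by (intro Max_ge) auto

lemma Q_bounds: "0 \<le> Q v t \<and> Q v t \<le> 1"
proof -
  obtain x where "x \<in> V" using Vne by auto
  hence "0 \<le> Q v t" using q_le_Q[of x v t] q_bounds[of v t x] by linarith
  moreover have "Q v t \<le> 1" unfolding Q_def using finV Vne q_bounds by (subst Max_le_iff) auto
  ultimately show ?thesis by simp
qed

lemma q_mult: "x \<in> V \<Longrightarrow> q v (s + t) x \<le> q v s x * Q v t"
proof (induction s arbitrary: x)
  case 0
  then show ?case using q_le_Q[of x v t] q_v[of v t] by (cases "x = v") auto
next
  case (Suc s)
  show ?case
  proof (cases "x = v")
    case True then show ?thesis using q_v by simp
  next
    case False
    have "q v (Suc s + t) x = (\<Sum>y\<in>nbrs E x. trans_prob E c x y * q v (s + t) y)"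
      using False by simp
    also have "\<dots> \<le> (\<Sum>y\<in>nbrs E x. trans_prob E c x y * (q v s y * Q v t))"
      using Suc.IH nbrs_sub P_nn by (intro sum_mono mult_left_mono) auto
    also have "\<dots> = q v (Suc s) x * Q v t"
      using False by (simp add: sum_distrib_right mult.assoc)
    finally show ?thesis .
  qed
qed

lemma q_mono_Suc: "q v (Suc t) x \<le> q v t x"
proof (cases "x \<in> V")
  case True
  have "q v (t + 1) x \<le> q v t x * Q v 1" by (rule q_mult[OF True])
  also have "\<dots> \<le> q v t x" using Q_bounds[of v 1] q_bounds[of v t x] by (simp add: mult_left_le)
  finally show ?thesis by simp
next
  case False
  then show ?thesis using nbrs_out[OF False] q_bounds[of v t x] by (cases "x = v") auto
qed

lemma q_mono: "s \<le> t \<Longrightarrow> q v t x \<le> q v s x"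
proof (induction t rule: dec_induct)
  case base then show ?case by simp
next
  case (step n) then show ?case using q_mono_Suc[of v n x] by linarith
qed

lemma q_pos: assumes "v \<in> V" "x \<in> V" shows "\<exists>k. q v k x < 1"
proof -
  let ?R = "{(a, b). a \<in> V \<and> b \<in> V \<and> {a, b} \<in> {e\<in>E. c e > 0}}"
  have "(x,v) \<in> ?R\<^sup>*" using pconn assms unfolding graph_connected_def by blast
  then show ?thesis
  proof (induction rule: converse_rtrancl_induct)
    case base
    then show ?case using q_v[of v 0] by (intro exI[of _ 0]) simp
  next
    case (step a b)
    then obtain k where k: "q v k b < 1" by blast
    show ?case
    proof (cases "a = v")
      case True then show ?thesis using q_v[of v 0] by (intro exI[of _ 0]) simp
    next
      case False
      have aV: "a \<in> V" and bn: "b \<in> nbrs E a" and cpos: "c {a,b} > 0"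
        using step.hyps(1) by (auto simp: nbrs_def)
      have Pb: "trans_prob E c a b > 0" using cpos d_pos[OF aV] bn unfolding P_eq by simp
      have "q v (Suc k) a = (\<Sum>y\<in>nbrs E a. trans_prob E c a y * q v k y)"
        using False by simp
      also have "\<dots> = trans_prob E c a b * q v k b + (\<Sum>y\<in>nbrs E a - {b}. trans_prob E c a y * q v k y)"
        using fin_nbrs bn by (simp add: sum.remove)
      also have "(\<Sum>y\<in>nbrs E a - {b}. trans_prob E c a y * q v k y) \<le> (\<Sum>y\<in>nbrs E a - {b}. trans_prob E c a y)"
        using P_nn q_bounds by (intro sum_mono mult_right_le_one_le) auto
      also have "(\<Sum>y\<in>nbrs E a - {b}. trans_prob E c a y) = 1 - trans_prob E c a b"
        using sumP[OF aV] fin_nbrs bn by (simp add: sum.remove)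
      finally have "q v (Suc k) a \<le> trans_prob E c a b * q v k b + (1 - trans_prob E c a b)" by simp
      moreover have "trans_prob E c a b * q v k b < trans_prob E c a b" using Pb k by simp
      ultimately show ?thesis by (intro exI[of _ "Suc k"]) linarith
    qed
  qed
qed

lemma Q_lt1: assumes "v \<in> V" shows "\<exists>m>0. Q v m < 1"
proof -
  have "\<forall>x\<in>V. \<exists>k. q v k x < 1" using q_pos[OF assms] by blast
  then obtain K where K: "\<forall>x\<in>V. q v (K x) x < 1" by metis
  define m where "m = Suc (Max (K ` V))"
  have "\<forall>x\<in>V. q v m x < 1"
  proof
    fix x assume x: "x \<in> V"
    have "K x \<le> m" unfolding m_def using finV x by (simp add: le_SucI)
    then have "q v m x \<le> q v (K x) x" by (rule q_mono)
    moreover have "q v (K x) x < 1" using K x by blast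
    ultimately show "q v m x < 1" by linarith
  qed
  moreover have "Q v m \<in> (q v m) ` V" unfolding Q_def using finV Vne by (intro Max_in) auto
  ultimately have "Q v m < 1" by auto
  moreover have "m > 0" unfolding m_def by simp
  ultimately show ?thesis by blast
qed

lemma q_decay: assumes "x \<in> V" shows "q v (k * m + r) x \<le> Q v m ^ k"
proof (induction k)
  case 0 then show ?case using q_bounds[of v r x] by simp
next
  case (Suc k)
  have "q v (Suc k * m + r) x = q v ((k * m + r) + m) x" by (simp add: algebra_simps)
  also have "\<dots> \<le> q v (k * m + r) x * Q v m" by (rule q_mult[OF assms])
  also have "\<dots> \<le> Q v m ^ k * Q v m" using Suc Q_bounds[of v m] by (intro mult_right_mono) auto
  finally show ?case by (simp add: mult.commute)
qed

lemma q_summable: assumes "v \<in> V" "x \<in> V" shows "summable (\<lambda>t. q v t x)"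
proof -
  obtain m where m: "m > 0" "Q v m < 1" using Q_lt1[OF assms(1)] by blast
  define b where "b = max (Q v m) (1/2)"
  have b: "0 < b" "b < 1" "Q v m \<le> b" using m unfolding b_def by auto
  define r where "r = root m b"
  have r: "0 < r" "r < 1" "r ^ m = b" using b m unfolding r_def by (auto simp: real_root_gt_zero)
  have bound: "q v t x \<le> r ^ t / r ^ m" for t
  proof -
    have "q v t x = q v ((t div m) * m + t mod m) x" by simp
    also have "\<dots> \<le> Q v m ^ (t div m)" by (rule q_decay[OF assms(2)])
    also have "\<dots> \<le> b ^ (t div m)" using b Q_bounds[of v m] by (intro power_mono) auto
    also have "\<dots> = r ^ (m * (t div m))" using r by (simp add: power_mult)
    also have "\<dots> \<le> r ^ t / r ^ m"
    proof -
      have "t \<le> m * (t div m) + m"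
        using m by (metis add_le_cancel_left div_mult_mod_eq less_imp_le mod_less_divisor mult.commute)
      hence "r ^ (m * (t div m) + m) \<le> r ^ t" using r by (intro power_decreasing) auto
      thus ?thesis using r b by (simp add: power_add pos_le_divide_eq mult.commute)
    qed
    finally show ?thesis .
  qed
  have "summable (\<lambda>t. r ^ t / r ^ m)" using r by (intro summable_divide summable_geometric) auto
  then show ?thesis
    by (rule summable_comparison_test'[where N=0]) (use bound q_bounds in auto)
qed


definition h where "h v x = (\<Sum>t. q v t x)"

lemma ht: assumes "v \<in> V" "x \<in> V" shows "hitting_time E c x v = ennreal (h v x)"
  unfolding hitting_time_def h_def
  by (rule suminf_ennreal2) (use q_bounds q_summable[OF assms] in auto)

lemma h_nn: assumes "v \<in> V" "x \<in> V" shows "h v x \<ge> 0"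
  unfolding h_def using q_summable[OF assms] q_bounds by (intro suminf_nonneg) auto

lemma h_v: "h v v = 0" unfolding h_def using q_v by simp

lemma h_eq: assumes v: "v \<in> V" and x: "x \<in> V" and xv: "x \<noteq> v"
  shows "d x * h v x = d x + (\<Sum>y\<in>V. w x y * h v y)"
proof -
  have "(\<Sum>t. q v (Suc t) x) = h v x - q v 0 x"
    unfolding h_def by (rule suminf_split_head[OF q_summable[OF v x]])
  hence 1: "(\<Sum>t. q v (Suc t) x) = h v x - 1" using xv by simp
  have "(\<Sum>t. q v (Suc t) x) = (\<Sum>t. \<Sum>y\<in>nbrs E x. trans_prob E c x y * q v t y)"
    using xv by simp
  also have "\<dots> = (\<Sum>y\<in>nbrs E x. \<Sum>t. trans_prob E c x y * q v t y)"
    by (rule suminf_sum) (use q_summable[OF v] nbrs_sub in \<open>auto intro: summable_mult\<close>)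
  also have "\<dots> = (\<Sum>y\<in>nbrs E x. trans_prob E c x y * h v y)"
    unfolding h_def using q_summable[OF v] nbrs_sub by (intro sum.cong refl suminf_mult) auto
  also have "\<dots> = (\<Sum>y\<in>V. w x y * h v y) / d x" by (rule sumP_mult)
  finally have "h v x = 1 + (\<Sum>y\<in>V. w x y * h v y) / d x" using 1 by simp
  then show ?thesis using d_pos[OF x] by (simp add: field_simps)
qed

lemma is_alg: "alg V w d h"
  by unfold_locales (use finV w_sym w_nn w_diag d_w d_pos h_v h_eq in auto)

end

theorem proposition1:
  fixes V :: "'a set" and E :: "'a set set" and c :: "'a set \<Rightarrow> real"
  assumes "simple_graph V E"
    and "graph_connected V E"
    and "card V \<ge> 2"
    and "\<forall>e\<in>E. c e \<ge> 0"
    and "graph_connected V {e\<in>E. c e > 0}"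
  shows "cyclic_cover_time V E c \<ge> ennreal (real (card V) ^ 2 / 2)"
proof -
  interpret g: gsetup V E c using assms by unfold_locales auto
  interpret a: alg V g.w g.d g.h by (rule g.is_alg)
  let ?S = "{xs. distinct xs \<and> set xs = V}"
  let ?F = "\<lambda>xs. \<Sum>i<length xs. hitting_time E c (xs ! i) (xs ! ((i + 1) mod length xs))"
  have finS: "finite ?S"
    by (rule finite_subset[OF _ finite_lists_length_le[OF g.finV, of "card V"]])
       (auto simp: distinct_card)
  have neS: "?S \<noteq> {}" using finite_distinct_list[OF g.finV] by auto
  have "\<forall>xs\<in>?S. ennreal (real (card V) ^ 2 / 2) \<le> ?F xs"
  proof
    fix xs assume "xs \<in> ?S"
    hence dx: "distinct xs" and sx: "set xs = V" by auto
    have len: "length xs = card V" using distinct_card[OF dx] sx by simp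
    hence n2: "length xs \<ge> 2" using assms(3) by simp
    have mem: "xs ! i \<in> V" "xs ! ((i + 1) mod length xs) \<in> V" if "i < length xs" for i
    proof -
      have "(i + 1) mod length xs < length xs" using n2 by (intro mod_less_divisor) linarith
      then show "xs ! i \<in> V" "xs ! ((i + 1) mod length xs) \<in> V" using that sx nth_mem by blast+
    qed
    have "?F xs = (\<Sum>i<length xs. ennreal (g.h (xs ! ((i + 1) mod length xs)) (xs ! i)))"
      using mem g.ht by (intro sum.cong refl) auto
    also have "\<dots> = ennreal (\<Sum>i<length xs. g.h (xs ! ((i + 1) mod length xs)) (xs ! i))"
      using mem g.h_nn by (intro sum_ennreal) auto
    finally have "?F xs = \<dots>" .
    moreover have "(\<Sum>i<length xs. g.h (xs ! ((i + 1) mod length xs)) (xs ! i)) \<ge> real (card V) ^ 2 / 2"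
      by (rule a.cyc[OF dx sx n2])
    ultimately show "ennreal (real (card V) ^ 2 / 2) \<le> ?F xs" by (simp add: ennreal_leI)
  qed
  then show ?thesis unfolding cyclic_cover_time_def using finS neS by simp
qed

end
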